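(* Let $m\ge1$ and let $A_m$ be an $m$-dimensional $\mathbb{Z}/2\mathbb{Z}$-vector space with the trivial partial order. If $m\le4$, there is a graph whose homological additive poset is isomorphic to $A_m$. If $m\ge5$, there is no such graph.
   Context: The trivial partial order on a $\mathbb{Z}/2\mathbb{Z}$-vector space $A$ is the order whose only relations are $0\le a$ and $a\le a$ for all $a\in A$. A graph is a 1-dimensional CW-complex. Each element of $H_1(\Gamma;\mathbb{Z}/2\mathbb{Z})$ is represented by a unique 1-cycle (finite set of edges with every vertex incident to an even number of them, with multiplicity); ordering $H_1$ by inclusion of 1-cycles gives the homological additive poset of $\Gamma$. An isomorphism of additive posets is a bijection that is a group isomorphism and an order isomorphism. *)

theory Defs
  imports Main
begin

text \<open>A graph (1-dimensional CW complex, loops and multiple edges allowed) is given by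
a vertex set V, an edge set E and an endpoint map; each edge e in E has endpoints
fst (ends e) and snd (ends e) in V (equal for a loop).\<close>

definition graph :: "'v set \<Rightarrow> 'e set \<Rightarrow> ('e \<Rightarrow> 'v \<times> 'v) \<Rightarrow> bool" where
  "graph V E ends \<longleftrightarrow> (\<forall>e\<in>E. fst (ends e) \<in> V \<and> snd (ends e) \<in> V)"

text \<open>Number of edge-ends of the edge set C at vertex v (a loop counts twice).\<close>
definition incid :: "('e \<Rightarrow> 'v \<times> 'v) \<Rightarrow> 'e set \<Rightarrow> 'v \<Rightarrow> nat" where
  "incid ends C v = card {e\<in>C. fst (ends e) = v} + card {e\<in>C. snd (ends e) = v}"

text \<open>Mod-2 1-cycles: finite edge sets with even incidence at every vertex.
These are in bijection with H_1(Gamma; Z/2).\<close>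
definition cycles :: "'v set \<Rightarrow> 'e set \<Rightarrow> ('e \<Rightarrow> 'v \<times> 'v) \<Rightarrow> 'e set set" where
  "cycles V E ends = {C. finite C \<and> C \<subseteq> E \<and> (\<forall>v\<in>V. even (incid ends C v))}"

text \<open>Addition in Z/2 vector spaces of sets: symmetric difference.\<close>
definition symdiff :: "'a set \<Rightarrow> 'a set \<Rightarrow> 'a set" where
  "symdiff A B = (A - B) \<union> (B - A)"

text \<open>A_m: the m-dimensional Z/2-vector space, modelled as subsets of {..<m} with
symmetric difference; trivial partial order: a \<le> b iff a = 0 or a = b.\<close>
definition Am :: "nat \<Rightarrow> nat set set" where
  "Am m = Pow {..<m}"

definition triv_le :: "'a set \<Rightarrow> 'a set \<Rightarrow> bool" where
  "triv_le a b \<longleftrightarrow> a = {} \<or> a = b"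

text \<open>Isomorphism of additive posets between the homological additive poset
(cycles, symmetric difference, inclusion) and A_m (trivial order).\<close>
definition hom_poset_iso_Am :: "'v set \<Rightarrow> 'e set \<Rightarrow> ('e \<Rightarrow> 'v \<times> 'v) \<Rightarrow> nat \<Rightarrow> bool" where
  "hom_poset_iso_Am V E ends m \<longleftrightarrow>
     (\<exists>f. bij_betw f (cycles V E ends) (Am m)
        \<and> (\<forall>C\<in>cycles V E ends. \<forall>D\<in>cycles V E ends. f (symdiff C D) = symdiff (f C) (f D))
        \<and> (\<forall>C\<in>cycles V E ends. \<forall>D\<in>cycles V E ends. C \<subseteq> D \<longleftrightarrow> triv_le (f C) (f D)))"

end

theory Submission
  imports Defs
begin

definition dg :: "('e \<Rightarrow> 'v \<times> 'v) \<Rightarrow> 'e \<Rightarrow> 'v \<Rightarrow> nat" where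
  "dg ends e v = (if fst (ends e) = v then 1 else 0) + (if snd (ends e) = v then 1 else 0)"

lemma card_filter_sum: "finite A \<Longrightarrow> card {x\<in>A. P x} = (\<Sum>x\<in>A. if P x then 1 else 0)"
  by (simp add: sum.If_cases Int_def)

lemma incid_sum: "finite C \<Longrightarrow> incid ends C v = (\<Sum>e\<in>C. dg ends e v)"
  unfolding incid_def dg_def
  by (simp add: card_filter_sum sum.distrib)

definition Zs :: "('e \<Rightarrow> 'v \<times> 'v) \<Rightarrow> 'e set \<Rightarrow> 'e set set" where
  "Zs ends F = {C. C \<subseteq> F \<and> (\<forall>v. even (incid ends C v))}"

definition inter :: "('e \<Rightarrow> 'v \<times> 'v) \<Rightarrow> 'e set \<Rightarrow> bool" where
  "inter ends F \<longleftrightarrow> (\<forall>C\<in>Zs ends F. \<forall>D\<in>Zs ends F. C \<noteq> {} \<longrightarrow> D \<noteq> {} \<longrightarrow> C \<inter> D \<noteq> {})"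

definition ep :: "('e \<Rightarrow> 'v \<times> 'v) \<Rightarrow> 'e \<Rightarrow> 'v set" where
  "ep ends e = {fst (ends e), snd (ends e)}"

definition WW :: "('e \<Rightarrow> 'v \<times> 'v) \<Rightarrow> 'e set \<Rightarrow> 'v set" where
  "WW ends F = \<Union> (ep ends ` F)"

lemma finite_WW: "finite F \<Longrightarrow> finite (WW ends F)"
  by (simp add: WW_def ep_def)

lemma incid_symdiff:
  assumes "finite C" "finite D"
  shows "incid ends (symdiff C D) v + 2 * incid ends (C \<inter> D) v = incid ends C v + incid ends D v"
proof -
  have fu: "finite (C \<union> D)" using assms by auto
  have e1: "symdiff C D \<union> (C \<inter> D) = C \<union> D" "symdiff C D \<inter> (C \<inter> D) = {}"
    by (auto simp: symdiff_def)
  have "(\<Sum>e\<in>C \<union> D. dg ends e v) = (\<Sum>e\<in>symdiff C D. dg ends e v) + (\<Sum>e\<in>C \<inter> D. dg ends e v)"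
    using fu e1 by (metis finite_Un sum.union_disjoint)
  moreover have "(\<Sum>e\<in>C \<union> D. dg ends e v) + (\<Sum>e\<in>C \<inter> D. dg ends e v) = (\<Sum>e\<in>C. dg ends e v) + (\<Sum>e\<in>D. dg ends e v)"
    using assms sum.union_inter by blast
  ultimately show ?thesis using assms fu
    by (simp add: incid_sum symdiff_def)
qed

lemma incid_symdiff_even:
  assumes "finite C" "finite D"
  shows "even (incid ends (symdiff C D) v) \<longleftrightarrow> (even (incid ends C v) \<longleftrightarrow> even (incid ends D v))"
  using incid_symdiff[OF assms, of ends v] by (metis even_add even_mult_iff even_numeral)

lemma Zs_symdiff:
  assumes "finite F" "C \<in> Zs ends F" "D \<in> Zs ends F"
  shows "symdiff C D \<in> Zs ends F"
proof -
  have "finite C" "finite D" using assms by (auto simp: Zs_def intro: finite_subset)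
  then show ?thesis using assms incid_symdiff_even[of C D ends]
    by (auto simp: Zs_def symdiff_def)
qed

lemma Zs_empty: "{} \<in> Zs ends F"
  by (simp add: Zs_def incid_def)

lemma finite_Zs: "finite F \<Longrightarrow> finite (Zs ends F)"
  by (rule finite_subset[of _ "Pow F"]) (auto simp: Zs_def)

lemma symdiff_self: "symdiff C C = {}" by (auto simp: symdiff_def)
lemma symdiff_eq_empty: "symdiff C D = {} \<longleftrightarrow> C = D" by (auto simp: symdiff_def)

lemma L_small:
  assumes "finite F" "inter ends F" "C \<in> Zs ends F" "C \<noteq> {}"
  shows "card (Zs ends F) \<le> 2 ^ card C"
proof -
  have fC: "finite C" using assms by (auto simp: Zs_def intro: finite_subset)
  have inj: "inj_on (\<lambda>D. D \<inter> C) (Zs ends F)"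
  proof (rule inj_onI)
    fix D1 D2 assume d: "D1 \<in> Zs ends F" "D2 \<in> Zs ends F" "D1 \<inter> C = D2 \<inter> C"
    have X: "symdiff D1 D2 \<in> Zs ends F" using Zs_symdiff assms(1) d by blast
    have "symdiff D1 D2 \<inter> C = {}" using d(3) by (auto simp: symdiff_def)
    then have "symdiff D1 D2 = {}" using assms(2,3,4) X unfolding inter_def by blast
    then show "D1 = D2" by (simp add: symdiff_eq_empty)
  qed
  have "card (Zs ends F) \<le> card (Pow C)"
    by (rule card_inj_on_le[OF inj]) (auto simp: fC)
  then show ?thesis by (simp add: card_Pow fC)
qed

lemma dg_sum_U:
  assumes "finite U" "ep ends e \<subseteq> U"
  shows "(\<Sum>v\<in>U. dg ends e v) = 2"
  using assms by (simp add: dg_def sum.distrib ep_def)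

lemma handshake:
  assumes "finite C" "finite U" "WW ends C \<subseteq> U"
  shows "(\<Sum>v\<in>U. incid ends C v) = 2 * card C"
proof -
  have "(\<Sum>v\<in>U. incid ends C v) = (\<Sum>v\<in>U. \<Sum>e\<in>C. dg ends e v)"
    using assms by (simp add: incid_sum)
  also have "\<dots> = (\<Sum>e\<in>C. \<Sum>v\<in>U. dg ends e v)" by (rule sum.swap)
  also have "\<dots> = (\<Sum>e\<in>C. 2)"
    using assms by (intro sum.cong refl dg_sum_U) (auto simp: WW_def)
  finally show ?thesis by simp
qed

lemma parity_count:
  "finite U \<Longrightarrow> even (\<Sum>v\<in>U. h v) \<longleftrightarrow> even (card {v\<in>U. odd (h (v::'a)) :: bool})"
proof (induction U rule: finite_induct)
  case empty then show ?case by simp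
next
  case (insert x U)
  have e: "{v \<in> insert x U. odd (h v)} = (if odd (h x) then insert x {v\<in>U. odd (h v)} else {v\<in>U. odd (h v)})"
    by auto
  have fin: "finite {v\<in>U. odd (h v)}" using insert by simp
  have c: "card {v \<in> insert x U. odd (h v)} = card {v\<in>U. odd (h v)} + (if odd (h x) then 1 else 0)"
    unfolding e using fin insert(2) by auto
  have s: "(\<Sum>v\<in>insert x U. h v) = h x + (\<Sum>v\<in>U. h v)" using insert by simp
  show ?case unfolding c s using insert(3) by auto
qed

lemma incid_zero:
  assumes "finite C" "v \<notin> WW ends C"
  shows "incid ends C v = 0"
  using assms by (auto simp: incid_sum dg_def WW_def ep_def)

lemma WW_mono: "C \<subseteq> F \<Longrightarrow> WW ends C \<subseteq> WW ends F"
  by (auto simp: WW_def)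

lemma count_fibers:
  assumes "finite A" "\<And>a. a \<in> A \<Longrightarrow> card {x\<in>A. h x = h a} \<le> k"
  shows "card A \<le> card (h ` A) * k"
proof -
  have eq: "(\<Union>b\<in>h ` A. {x\<in>A. h x = b}) = A" by auto
  have "card (\<Union>b\<in>h ` A. {x\<in>A. h x = b}) \<le> (\<Sum>b\<in>h ` A. card {x\<in>A. h x = b})"
    by (rule card_UN_le) (use assms(1) in simp)
  then have "card A \<le> (\<Sum>b\<in>h ` A. card {x\<in>A. h x = b})" unfolding eq .
  also have "\<dots> \<le> (\<Sum>b\<in>h ` A. k)"
    by (rule sum_mono) (use assms(2) in auto)
  finally show ?thesis by simp
qed

lemma cardsplit: "card S = card (S - {w}) + (if w \<in> S then 1 else 0)" if "finite S"
proof (cases "w \<in> S")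
  case True
  then have "card S > 0" using that card_gt_0_iff by blast
  then show ?thesis using True that by (simp add: card_Diff_singleton)
qed simp

lemma even_sets_bound:
  assumes "finite W0" "w0 \<in> W0" "\<And>S. S \<in> SS \<Longrightarrow> S \<subseteq> W0 \<and> even (card S)"
  shows "card SS \<le> 2 ^ (card W0 - 1)"
proof -
  have inj: "inj_on (\<lambda>S. S - {w0}) SS"
  proof (rule inj_onI)
    fix S1 S2 assume s: "S1 \<in> SS" "S2 \<in> SS" "S1 - {w0} = S2 - {w0}"
    have a1: "S1 \<subseteq> W0 \<and> even (card S1)" using assms(3)[OF s(1)] .
    have a2: "S2 \<subseteq> W0 \<and> even (card S2)" using assms(3)[OF s(2)] .
    have f1: "finite S1" "finite S2" using a1 a2 assms(1) finite_subset by blast+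
    have k1: "card S1 = card (S1 - {w0}) + (if w0 \<in> S1 then 1 else 0)"
      using f1(1) by (rule cardsplit)
    have k2: "card S2 = card (S2 - {w0}) + (if w0 \<in> S2 then 1 else 0)"
      using f1(2) by (rule cardsplit)
    have "w0 \<in> S1 \<longleftrightarrow> w0 \<in> S2"
    proof (rule ccontr)
      assume "\<not> (w0 \<in> S1 \<longleftrightarrow> w0 \<in> S2)"
      then have "card S1 = card S2 + 1 \<or> card S2 = card S1 + 1" using k1 k2 s(3) by auto
      then show False using a1 a2 by auto
    qed
    then show "S1 = S2" using s(3) by blast
  qed
  have "card SS \<le> card (Pow (W0 - {w0}))"
  proof (rule card_inj_on_le[OF inj])
    show "(\<lambda>S. S - {w0}) ` SS \<subseteq> Pow (W0 - {w0})" using assms(3) by blast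
    show "finite (Pow (W0 - {w0}))" using assms(1) by simp
  qed
  then show ?thesis using assms by (simp add: card_Pow)
qed

lemma T1:
  assumes fF: "finite F" and ne: "F \<noteq> {}"
  shows "2 ^ card F \<le> card (Zs ends F) * 2 ^ (card (WW ends F) - 1)"
proof -
  define W0 where "W0 = WW ends F"
  define bd where "bd C = {v\<in>W0. odd (incid ends C v)}" for C
  have fW: "finite W0" using fF by (simp add: W0_def finite_WW)
  obtain e0 where "e0 \<in> F" using ne by auto
  then obtain w0 where w0: "w0 \<in> W0" by (auto simp: W0_def WW_def ep_def)
  have fin: "C \<subseteq> F \<Longrightarrow> finite C" for C using fF finite_subset by blast
  have zero: "C \<subseteq> F \<Longrightarrow> v \<notin> W0 \<Longrightarrow> incid ends C v = 0" for C v
    using incid_zero[of C v ends] WW_mono[of C F ends] fin by (auto simp: W0_def)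
  have fib: "symdiff D C \<in> Zs ends F" if "C \<subseteq> F" "D \<subseteq> F" "bd D = bd C" for C D
  proof -
    have "even (incid ends (symdiff D C) v)" for v
    proof (cases "v \<in> W0")
      case True
      then have "odd (incid ends D v) \<longleftrightarrow> odd (incid ends C v)" using that(3) unfolding bd_def by blast
      then show ?thesis using incid_symdiff_even[of D C ends v] fin that by auto
    next
      case False then show ?thesis using zero that incid_symdiff_even[of D C ends v] fin by auto
    qed
    then show ?thesis using that by (auto simp: Zs_def symdiff_def)
  qed
  have fibcard: "card {D\<in>Pow F. bd D = bd C} \<le> card (Zs ends F)" if "C \<in> Pow F" for C
  proof -
    have "{D\<in>Pow F. bd D = bd C} \<subseteq> (\<lambda>X. symdiff X C) ` Zs ends F"
    proof
      fix D assume "D \<in> {D\<in>Pow F. bd D = bd C}"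
      then have d: "D \<subseteq> F" "bd D = bd C" by auto
      have "D = symdiff (symdiff D C) C" by (auto simp: symdiff_def)
      then show "D \<in> (\<lambda>X. symdiff X C) ` Zs ends F" using fib[OF _ d(1) d(2)] that by blast
    qed
    then have "card {D\<in>Pow F. bd D = bd C} \<le> card ((\<lambda>X. symdiff X C) ` Zs ends F)"
      by (meson card_mono fF finite_Zs finite_imageI)
    also have "\<dots> \<le> card (Zs ends F)" by (rule card_image_le) (simp add: fF finite_Zs)
    finally show ?thesis .
  qed
  have c1: "card (Pow F) \<le> card (bd ` Pow F) * card (Zs ends F)"
    by (rule count_fibers) (use fF fibcard in auto)
  have evbd: "even (card (bd C))" if "C \<subseteq> F" for C
  proof -
    have "(\<Sum>v\<in>W0. incid ends C v) = 2 * card C"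
      using handshake[of C W0 ends] fin[OF that] fW WW_mono[of C F ends, OF that] by (auto simp: W0_def)
    then show ?thesis using parity_count[OF fW, of "\<lambda>v. incid ends C v"] by (simp add: bd_def)
  qed
  have c2: "card (bd ` Pow F) \<le> 2 ^ (card W0 - 1)"
    by (rule even_sets_bound[OF fW w0]) (use evbd in \<open>auto simp: bd_def\<close>)
  have "2 ^ card F \<le> card (bd ` Pow F) * card (Zs ends F)" using c1 fF by (simp add: card_Pow)
  also have "\<dots> \<le> 2 ^ (card W0 - 1) * card (Zs ends F)" using c2 by simp
  finally show ?thesis by (simp add: W0_def mult.commute)
qed

lemma L_half:
  assumes fF: "finite F" and C0: "C0 \<in> Zs ends F" and g: "g \<in> C0"
  shows "card (Zs ends F) = 2 * card (Zs ends (F - {g}))"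
proof -
  have A: "Zs ends (F - {g}) = {C\<in>Zs ends F. g \<notin> C}" by (auto simp: Zs_def)
  define B where "B = {C\<in>Zs ends F. g \<in> C}"
  have split: "Zs ends F = {C\<in>Zs ends F. g \<notin> C} \<union> B" "{C\<in>Zs ends F. g \<notin> C} \<inter> B = {}"
    by (auto simp: B_def)
  have bij: "bij_betw (\<lambda>C. symdiff C C0) {C\<in>Zs ends F. g \<notin> C} B"
  proof (rule bij_betw_byWitness[where f' = "\<lambda>C. symdiff C C0"])
    show "\<forall>a\<in>{C \<in> Zs ends F. g \<notin> C}. symdiff (symdiff a C0) C0 = a" by (auto simp: symdiff_def)
    show "\<forall>a'\<in>B. symdiff (symdiff a' C0) C0 = a'" by (auto simp: symdiff_def)
    show "(\<lambda>C. symdiff C C0) ` {C \<in> Zs ends F. g \<notin> C} \<subseteq> B"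
      using Zs_symdiff[OF fF _ C0] g by (auto simp: B_def symdiff_def)
    show "(\<lambda>C. symdiff C C0) ` B \<subseteq> {C \<in> Zs ends F. g \<notin> C}"
      using Zs_symdiff[OF fF _ C0] g by (auto simp: B_def symdiff_def)
  qed
  have "card (Zs ends F) = card {C\<in>Zs ends F. g \<notin> C} + card B"
    using split card_Un_disjoint fF finite_Zs by (metis (no_types, lifting) finite_Un)
  also have "card B = card {C\<in>Zs ends F. g \<notin> C}" using bij bij_betw_same_card by metis
  finally show ?thesis using A by simp
qed

definition other :: "('e \<Rightarrow> 'v \<times> 'v) \<Rightarrow> 'v \<Rightarrow> 'e \<Rightarrow> 'v" where
  "other ends v e = (if fst (ends e) = v then snd (ends e) else fst (ends e))"

lemma dg_one:
  assumes "dg ends e v = 1"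
  shows "other ends v e \<noteq> v" "dg ends e x = (if x = v then 1 else 0) + (if x = other ends v e then 1 else 0)"
    "ep ends e = {v, other ends v e}"
  using assms by (auto simp: dg_def other_def ep_def split: if_splits)

lemma dg_pos: "v \<in> ep ends e \<Longrightarrow> dg ends e v \<ge> 1"
  by (auto simp: dg_def ep_def)

lemma dg_le2: "dg ends e v \<le> 2"
  by (auto simp: dg_def)

lemma contract:
  assumes fF: "finite F" and eF: "e \<in> F" and fF': "f \<in> F" and ef: "e \<noteq> f"
    and ve: "v \<in> ep ends e" and vf: "v \<in> ep ends f" and deg: "incid ends F v = 2"
  defines "ends' \<equiv> ends(f := (other ends v e, other ends v f))"
  shows "card (Zs ends' (F - {e})) = card (Zs ends F) \<and> (inter ends F \<longrightarrow> inter ends' (F - {e}))"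
proof -
  define u where "u = other ends v e"
  define w where "w = other ends v f"
  have s: "incid ends F v = dg ends e v + dg ends f v + (\<Sum>g\<in>F - {e, f}. dg ends g v)"
  proof -
    have "incid ends F v = (\<Sum>g\<in>F. dg ends g v)" using fF by (simp add: incid_sum)
    also have "\<dots> = (\<Sum>g\<in>{e,f}. dg ends g v) + (\<Sum>g\<in>F - {e, f}. dg ends g v)"
      using fF eF fF' by (metis (no_types, lifting) empty_subsetI insert_subset sum.subset_diff finite.emptyI finite.insertI add.commute)
    finally show ?thesis using ef by simp
  qed
  have de: "dg ends e v = 1" and df: "dg ends f v = 1" and d0: "\<And>g. g \<in> F - {e, f} \<Longrightarrow> dg ends g v = 0"
  proof -
    have a: "dg ends e v \<ge> 1" "dg ends f v \<ge> 1" using dg_pos ve vf by auto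
    then show "dg ends e v = 1" "dg ends f v = 1" using s deg by linarith+
    have "(\<Sum>g\<in>F - {e, f}. dg ends g v) = 0" using s deg a by linarith
    then show "\<And>g. g \<in> F - {e, f} \<Longrightarrow> dg ends g v = 0" using fF by simp
  qed
  have dge: "dg ends e x = (if x = v then 1 else 0) + (if x = u then 1 else 0)" for x
    using dg_one(2)[OF de] by (simp add: u_def)
  have dgf: "dg ends f x = (if x = v then 1 else 0) + (if x = w then 1 else 0)" for x
    using dg_one(2)[OF df] by (simp add: w_def)
  have dgf': "dg ends' f x = (if x = u then 1 else 0) + (if x = w then 1 else 0)" for x
    by (simp add: ends'_def dg_def u_def w_def)
  have dgg: "g \<noteq> f \<Longrightarrow> dg ends' g x = dg ends g x" for g x
    by (simp add: ends'_def dg_def)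
  define psi where "psi C = (if f \<in> C then insert e C else C)" for C
  have fin: "C \<subseteq> F \<Longrightarrow> finite C" for C using fF finite_subset by blast
  have key: "even (incid ends' C x) \<longleftrightarrow> even (incid ends (psi C) x)" if C: "C \<subseteq> F - {e}" for C x
  proof -
   have fc: "finite C" using fin[of C] C by auto
   show ?thesis
   proof (cases "f \<in> C")
    case False
    have "incid ends' C x = incid ends C x"
      unfolding incid_sum[OF fc] using False by (intro sum.cong refl dgg) auto
    then show ?thesis using False by (simp add: psi_def)
  next
    case True
    have "incid ends' C x = dg ends' f x + (\<Sum>g\<in>C - {f}. dg ends' g x)"
      unfolding incid_sum[OF fc] using sum.remove[OF fc True] .
    also have "(\<Sum>g\<in>C - {f}. dg ends' g x) = (\<Sum>g\<in>C - {f}. dg ends g x)"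
      by (rule sum.cong) (auto simp: dgg)
    finally have i1: "incid ends' C x = dg ends' f x + (\<Sum>g\<in>C - {f}. dg ends g x)" .
    have eC: "e \<notin> C" using C by auto
    have "incid ends (insert e C) x = dg ends e x + incid ends C x"
      using fc eC by (simp add: incid_sum)
    also have "incid ends C x = dg ends f x + (\<Sum>g\<in>C - {f}. dg ends g x)"
      unfolding incid_sum[OF fc] using sum.remove[OF fc True] .
    finally have i2: "incid ends (insert e C) x = dg ends e x + dg ends f x + (\<Sum>g\<in>C - {f}. dg ends g x)" by simp
    have "incid ends (insert e C) x = incid ends' C x + 2 * (if x = v then 1 else 0)"
      unfolding i1 i2 dge dgf dgf' by simp
    then show ?thesis using True by (simp add: psi_def)
   qed
  qed
  have par: "e \<in> D \<longleftrightarrow> f \<in> D" if D: "D \<in> Zs ends F" for D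
  proof -
    have Dsub: "D \<subseteq> F" and ev: "even (incid ends D v)" using D by (auto simp: Zs_def)
    have "incid ends D v = (\<Sum>g\<in>D. dg ends g v)" using fin[OF Dsub] by (simp add: incid_sum)
    also have "\<dots> = (\<Sum>g\<in>D. (if g = e then 1 else 0) + (if g = f then 1 else 0))"
      using Dsub d0 de df ef by (intro sum.cong) auto
    also have "\<dots> = (if e \<in> D then 1 else 0) + (if f \<in> D then 1 else 0)"
      using fin[OF Dsub] by (simp add: sum.distrib)
    finally show ?thesis using ev by (auto split: if_splits)
  qed
  have bij: "bij_betw psi (Zs ends' (F - {e})) (Zs ends F)"
  proof (rule bij_betw_byWitness[where f' = "\<lambda>D. D - {e}"])
    show "\<forall>a\<in>Zs ends' (F - {e}). psi a - {e} = a" by (auto simp: psi_def Zs_def)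
    show "\<forall>a'\<in>Zs ends F. psi (a' - {e}) = a'" using par ef by (auto simp: psi_def)
    show "psi ` Zs ends' (F - {e}) \<subseteq> Zs ends F"
    proof
      fix D assume "D \<in> psi ` Zs ends' (F - {e})"
      then obtain C where C: "C \<in> Zs ends' (F - {e})" "D = psi C" by auto
      have "psi C \<subseteq> F" using C eF by (auto simp: Zs_def psi_def)
      then show "D \<in> Zs ends F" using C key[of C] by (auto simp: Zs_def)
    qed
    show "(\<lambda>D. D - {e}) ` Zs ends F \<subseteq> Zs ends' (F - {e})"
    proof
      fix C assume "C \<in> (\<lambda>D. D - {e}) ` Zs ends F"
      then obtain D where D: "D \<in> Zs ends F" "C = D - {e}" by auto
      have "psi C = D" using par[OF D(1)] D(2) ef by (auto simp: psi_def)
      moreover have "C \<subseteq> F - {e}" using D by (auto simp: Zs_def)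
      ultimately show "C \<in> Zs ends' (F - {e})" using D key[of C] by (auto simp: Zs_def)
    qed
  qed
  have c: "card (Zs ends' (F - {e})) = card (Zs ends F)" using bij bij_betw_same_card by blast
  have i: "inter ends' (F - {e})" if I: "inter ends F"
    unfolding inter_def
  proof (intro ballI impI)
    fix C D assume C: "C \<in> Zs ends' (F - {e})" and D: "D \<in> Zs ends' (F - {e})" and ne: "C \<noteq> {}" "D \<noteq> {}"
    have pC: "psi C \<in> Zs ends F" "psi D \<in> Zs ends F" using bij C D bij_betwE by blast+
    have "psi C \<noteq> {}" "psi D \<noteq> {}" using ne by (auto simp: psi_def)
    then obtain t where t: "t \<in> psi C" "t \<in> psi D" using I pC unfolding inter_def by blast
    have eC: "e \<notin> C" "e \<notin> D" using C D by (auto simp: Zs_def)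
    show "C \<inter> D \<noteq> {}"
    proof (cases "t = e")
      case True then have "f \<in> C" "f \<in> D" using t eC by (auto simp: psi_def split: if_splits)
      then show ?thesis by blast
    next
      case False then show ?thesis using t by (auto simp: psi_def split: if_splits)
    qed
  qed
  show ?thesis using c i by blast
qed

lemma ep_other:
  assumes "v \<in> ep ends e" "fst (ends e) \<noteq> snd (ends e)"
  shows "ep ends e = {v, other ends v e}" "other ends v e \<noteq> v"
  using assms by (auto simp: ep_def other_def)

lemma card3: "card {a, b, c} \<le> 3"
  by (simp add: card_insert_if)
lemma card4: "card {a, b, c, d} \<le> 4"
  by (simp add: card_insert_if)

lemma WW_ins: "WW ends (insert e F) = ep ends e \<union> WW ends F" "WW ends {} = {}"
  by (auto simp: WW_def)

lemma cubic:
  fixes ends :: "'e \<Rightarrow> 'v \<times> 'v" and F :: "'e set"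
  assumes fF: "finite F" and ne: "F \<noteq> {}"
    and deg3: "\<And>v. v \<in> WW ends F \<Longrightarrow> incid ends F v \<ge> 3"
    and c32: "card (Zs ends F) \<le> 32"
    and nosmall: "\<And>F0. F0 \<subseteq> F \<Longrightarrow> F0 \<noteq> {} \<Longrightarrow> card F0 \<le> 4 \<Longrightarrow> card F0 < card (WW ends F0)"
  shows False
proof -
  define b where "b = card (WW ends F)"
  have fW: "finite (WW ends F)" using fF by (simp add: finite_WW)
  have bpos: "b \<ge> 1"
  proof -
    obtain e where "e \<in> F" using ne by auto
    then have "fst (ends e) \<in> WW ends F" by (auto simp: WW_def ep_def)
    then have "WW ends F \<noteq> {}" by blast
    then show ?thesis using fW unfolding b_def by (simp add: Suc_le_eq card_gt_0_iff)
  qed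
  have b8: "b \<le> 8"
  proof -
    have "2 ^ card F \<le> card (Zs ends F) * 2 ^ (b - 1)" using T1[OF fF ne] by (simp add: b_def)
    also have "\<dots> \<le> 32 * 2 ^ (b - 1)" using c32 by simp
    also have "\<dots> = (2::nat) ^ (b + 4)" using bpos
      by (cases b) (auto simp: power_add)
    finally have "card F \<le> b + 4" by simp
    moreover have "3 * b \<le> 2 * card F"
    proof -
      have "(\<Sum>v\<in>WW ends F. (3::nat)) \<le> (\<Sum>v\<in>WW ends F. incid ends F v)"
        by (rule sum_mono) (rule deg3)
      also have "\<dots> = 2 * card F" using handshake[OF fF fW] by simp
      finally show ?thesis by (simp add: b_def)
    qed
    ultimately show ?thesis by linarith
  qed
  have small: False if "F0 \<subseteq> F" "F0 \<noteq> {}" "card F0 \<le> 4" "WW ends F0 \<subseteq> X" "finite X" "card X \<le> card F0" for F0 X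
  proof -
    have "card (WW ends F0) \<le> card X" using that card_mono by blast
    then show False using nosmall[OF that(1-3)] that(6) by linarith
  qed
  have noloop: "fst (ends e) \<noteq> snd (ends e)" if "e \<in> F" for e
  proof
    assume h: "fst (ends e) = snd (ends e)"
    show False by (rule small[of "{e}" "{fst (ends e)}"]) (use that h in \<open>auto simp: WW_def ep_def\<close>)
  qed
  have nopar: False if "e1 \<in> F" "e2 \<in> F" "e1 \<noteq> e2" "ep ends e1 = ep ends e2" for e1 e2
    by (rule small[of "{e1, e2}" "ep ends e1"]) (use that in \<open>auto simp: WW_def ep_def card_insert_if\<close>)
  have notri: False if "e1 \<in> F" "e2 \<in> F" "e3 \<in> F" "e1 \<noteq> e2" "e1 \<noteq> e3" "e2 \<noteq> e3"
     "ep ends e1 \<subseteq> {p,q,r}" "ep ends e2 \<subseteq> {p,q,r}" "ep ends e3 \<subseteq> {p,q,r}" for e1 e2 e3 p q r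
  proof (rule small[of "{e1, e2, e3}" "{p,q,r}"])
    show "card {p, q, r} \<le> card {e1, e2, e3}" using card3[of p q r] that by simp
  qed (use that in \<open>auto simp: WW_def\<close>)
  have nosq: False if "e1 \<in> F" "e2 \<in> F" "e3 \<in> F" "e4 \<in> F" "e1 \<noteq> e2" "e1 \<noteq> e3" "e2 \<noteq> e3"
     "e1 \<noteq> e4" "e2 \<noteq> e4" "e3 \<noteq> e4"
     "ep ends e1 \<subseteq> {p,q,r,s}" "ep ends e2 \<subseteq> {p,q,r,s}" "ep ends e3 \<subseteq> {p,q,r,s}" "ep ends e4 \<subseteq> {p,q,r,s}"
     for e1 e2 e3 e4 p q r s
  proof (rule small[of "{e1, e2, e3, e4}" "{p,q,r,s}"])
    show "card {p, q, r, s} \<le> card {e1, e2, e3, e4}" using card4[of p q r s] that by simp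
  qed (use that in \<open>auto simp: WW_def\<close>)
  define A where "A v = {e\<in>F. v \<in> ep ends e}" for v
  have finA: "finite (A v)" for v using fF by (simp add: A_def)
  have degA: "card (A v) \<ge> 3" if "v \<in> WW ends F" for v
  proof -
    have "incid ends F v = (\<Sum>e\<in>F. dg ends e v)" using fF by (simp add: incid_sum)
    also have "\<dots> = (\<Sum>e\<in>F. if v \<in> ep ends e then 1 else 0)"
      by (rule sum.cong) (auto dest: noloop simp: dg_def ep_def)
    also have "\<dots> = card (A v)" using fF by (simp add: A_def card_filter_sum)
    finally show ?thesis using deg3[OF that] by simp
  qed
  have AW: "e \<in> A v \<Longrightarrow> ep ends e \<subseteq> WW ends F" for e v by (auto simp: A_def WW_def)
  have Aep: "e \<in> A v \<Longrightarrow> ep ends e = {v, other ends v e} \<and> other ends v e \<noteq> v" for e v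
  proof -
    assume "e \<in> A v"
    then have h1: "v \<in> ep ends e" and h2: "fst (ends e) \<noteq> snd (ends e)" using noloop by (auto simp: A_def)
    show ?thesis using ep_other(1)[OF h1 h2] ep_other(2)[OF h1 h2] by (rule conjI)
  qed
  obtain v where vW: "v \<in> WW ends F" using ne by (auto simp: WW_def ep_def)
  obtain a :: "nat \<Rightarrow> 'e" where a: "a ` {..<3} \<subseteq> A v" "inj_on a {..<3}"
    using card_le_inj[of "{..<3::nat}" "A v"] finA degA[OF vW] by auto
  define x where "x i = other ends v (a i)" for i
  have aA: "i < 3 \<Longrightarrow> a i \<in> A v" for i using a by auto
  have epa: "i < 3 \<Longrightarrow> ep ends (a i) = {v, x i}" for i using Aep[OF aA] by (simp add: x_def)
  have F1: "i < 3 \<Longrightarrow> x i \<noteq> v" for i using Aep[OF aA] by (simp add: x_def)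
  have xW: "i < 3 \<Longrightarrow> x i \<in> WW ends F" for i using AW[OF aA] epa by auto
  have aF: "i < 3 \<Longrightarrow> a i \<in> F" for i using aA by (auto simp: A_def)
  have F2: "x i \<noteq> x j" if "i < 3" "j < 3" "i \<noteq> j" for i j
  proof
    assume "x i = x j"
    then have "ep ends (a i) = ep ends (a j)" using epa that by simp
    moreover have "a i \<noteq> a j" using a(2) that by (auto simp: inj_on_def)
    ultimately show False using nopar aF that by blast
  qed
  have cB: "card (A (x i) - A v) \<ge> 2" if "i < 3" for i
  proof -
    have "A (x i) \<inter> A v \<subseteq> {a i}"
    proof
      fix e assume e: "e \<in> A (x i) \<inter> A v"
      have "ep ends e = {v, other ends v e}" "x i \<in> ep ends e" using Aep e by (auto simp: A_def)
      then have "ep ends e = ep ends (a i)" using epa[OF that] F1[OF that] by auto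
      then show "e \<in> {a i}" using nopar aF[OF that] e by (auto simp: A_def)
    qed
    then have "card (A (x i) \<inter> A v) \<le> 1"
      by (metis card.empty card.insert empty_iff finite.intros(1) card_mono finite.intros(2) One_nat_def)
    moreover have "card (A (x i)) = card (A (x i) - A v) + card (A (x i) \<inter> A v)"
      using finA by (metis Diff_Diff_Int card_Diff_subset_Int finite_Int inf_le1 card_mono le_add_diff_inverse2 Int_commute)
    ultimately show ?thesis using degA[OF xW[OF that]] by linarith
  qed
  have "\<forall>i. \<exists>g::nat\<Rightarrow>'e. i < 3 \<longrightarrow> g ` {..<2} \<subseteq> A (x i) - A v \<and> inj_on g {..<2}"
  proof
    fix i show "\<exists>g::nat\<Rightarrow>'e. i < 3 \<longrightarrow> g ` {..<2} \<subseteq> A (x i) - A v \<and> inj_on g {..<2}"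
    proof (cases "i < 3")
      case True then show ?thesis
        using card_le_inj[of "{..<2::nat}" "A (x i) - A v"] finA cB[OF True] by auto
    qed simp
  qed
  then obtain bb :: "nat \<Rightarrow> nat \<Rightarrow> 'e" where bb: "\<And>i. i < 3 \<Longrightarrow> bb i ` {..<2} \<subseteq> A (x i) - A v \<and> inj_on (bb i) {..<2}"
    by metis
  define y where "y i j = other ends (x i) (bb i j)" for i j
  have bA: "i < 3 \<Longrightarrow> j < 2 \<Longrightarrow> bb i j \<in> A (x i) \<and> bb i j \<notin> A v" for i j using bb by blast
  have bF: "i < 3 \<Longrightarrow> j < 2 \<Longrightarrow> bb i j \<in> F" for i j using bA by (auto simp: A_def)
  have epb: "i < 3 \<Longrightarrow> j < 2 \<Longrightarrow> ep ends (bb i j) = {x i, y i j}" for i j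
    using Aep bA by (simp add: y_def)
  have F4: "i < 3 \<Longrightarrow> j < 2 \<Longrightarrow> y i j \<noteq> x i" for i j using Aep bA by (simp add: y_def)
  have yW: "i < 3 \<Longrightarrow> j < 2 \<Longrightarrow> y i j \<in> WW ends F" for i j using AW bA epb by blast
  have vb: "i < 3 \<Longrightarrow> j < 2 \<Longrightarrow> v \<notin> ep ends (bb i j)" for i j using bA bF by (auto simp: A_def)
  have F3: "i < 3 \<Longrightarrow> j < 2 \<Longrightarrow> y i j \<noteq> v" for i j using vb epb by auto
  have ba: "i < 3 \<Longrightarrow> j < 2 \<Longrightarrow> k < 3 \<Longrightarrow> bb i j \<noteq> a k" for i j k using vb epa by fastforce
  have ainj: "i < 3 \<Longrightarrow> k < 3 \<Longrightarrow> i \<noteq> k \<Longrightarrow> a i \<noteq> a k" for i k using a(2) by (auto simp: inj_on_def)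
  have F5: "y i j \<noteq> x k" if "i < 3" "j < 2" "k < 3" "i \<noteq> k" for i j k
  proof
    assume h: "y i j = x k"
    have n1: "a i \<noteq> bb i j" "a k \<noteq> bb i j" using ba[of i j i] ba[of i j k] that by auto
    show False
      by (rule notri[of "a i" "a k" "bb i j" v "x i" "x k"])
         (use that h aF bF n1 ainj epa epb in auto)
  qed
  have F6: "y i j \<noteq> y i l" if "i < 3" "j < 2" "l < 2" "j \<noteq> l" for i j l
  proof
    assume h: "y i j = y i l"
    have "bb i j \<noteq> bb i l" using bb[OF that(1)] that by (auto simp: inj_on_def)
    then show False using nopar[of "bb i j" "bb i l"] bF epb h that by auto
  qed
  have F7: "y i j \<noteq> y k l" if "i < 3" "j < 2" "k < 3" "l < 2" "i \<noteq> k" for i j k l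
  proof
    assume h: "y i j = y k l"
    have "bb i j \<noteq> bb k l"
    proof
      assume "bb i j = bb k l"
      then have "{x i, y i j} = {x k, y k l}" using epb that by metis
      then show False using h F4 F2 that by (auto simp: doubleton_eq_iff)
    qed
    moreover have "a i \<noteq> bb i j" "a k \<noteq> bb i j" "a i \<noteq> bb k l" "a k \<noteq> bb k l"
      using ba[of i j i] ba[of i j k] ba[of k l i] ba[of k l k] that by auto
    ultimately show False
      using nosq[of "a i" "a k" "bb i j" "bb k l" v "x i" "x k" "y i j"] that h aF bF ba ainj epa epb
      by auto
  qed
  define L where "L = [v, x 0, x 1, x 2, y 0 0, y 0 1, y 1 0, y 1 1, y 2 0, y 2 1]"
  have "v \<noteq> x 0" using F1[of 0] by auto
  moreover
  have "v \<noteq> x 1" using F1[of 1] by auto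
  moreover
  have "v \<noteq> x 2" using F1[of 2] by auto
  moreover
  have "v \<noteq> y 0 0" using F3[of 0 0] by auto
  moreover
  have "v \<noteq> y 0 1" using F3[of 0 1] by auto
  moreover
  have "v \<noteq> y 1 0" using F3[of 1 0] by auto
  moreover
  have "v \<noteq> y 1 1" using F3[of 1 1] by auto
  moreover
  have "v \<noteq> y 2 0" using F3[of 2 0] by auto
  moreover
  have "v \<noteq> y 2 1" using F3[of 2 1] by auto
  moreover
  have "x 0 \<noteq> x 1" using F2[of 0 1] by auto
  moreover
  have "x 0 \<noteq> x 2" using F2[of 0 2] by auto
  moreover
  have "x 0 \<noteq> y 0 0" using F4[of 0 0] by auto
  moreover
  have "x 0 \<noteq> y 0 1" using F4[of 0 1] by auto
  moreover
  have "x 0 \<noteq> y 1 0" using F5[of 1 0 0] by auto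
  moreover
  have "x 0 \<noteq> y 1 1" using F5[of 1 1 0] by auto
  moreover
  have "x 0 \<noteq> y 2 0" using F5[of 2 0 0] by auto
  moreover
  have "x 0 \<noteq> y 2 1" using F5[of 2 1 0] by auto
  moreover
  have "x 1 \<noteq> x 2" using F2[of 1 2] by auto
  moreover
  have "x 1 \<noteq> y 0 0" using F5[of 0 0 1] by auto
  moreover
  have "x 1 \<noteq> y 0 1" using F5[of 0 1 1] by auto
  moreover
  have "x 1 \<noteq> y 1 0" using F4[of 1 0] by auto
  moreover
  have "x 1 \<noteq> y 1 1" using F4[of 1 1] by auto
  moreover
  have "x 1 \<noteq> y 2 0" using F5[of 2 0 1] by auto
  moreover
  have "x 1 \<noteq> y 2 1" using F5[of 2 1 1] by auto
  moreover
  have "x 2 \<noteq> y 0 0" using F5[of 0 0 2] by auto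
  moreover
  have "x 2 \<noteq> y 0 1" using F5[of 0 1 2] by auto
  moreover
  have "x 2 \<noteq> y 1 0" using F5[of 1 0 2] by auto
  moreover
  have "x 2 \<noteq> y 1 1" using F5[of 1 1 2] by auto
  moreover
  have "x 2 \<noteq> y 2 0" using F4[of 2 0] by auto
  moreover
  have "x 2 \<noteq> y 2 1" using F4[of 2 1] by auto
  moreover
  have "y 0 0 \<noteq> y 0 1" using F6[of 0 0 1] by auto
  moreover
  have "y 0 0 \<noteq> y 1 0" using F7[of 0 0 1 0] by auto
  moreover
  have "y 0 0 \<noteq> y 1 1" using F7[of 0 0 1 1] by auto
  moreover
  have "y 0 0 \<noteq> y 2 0" using F7[of 0 0 2 0] by auto
  moreover
  have "y 0 0 \<noteq> y 2 1" using F7[of 0 0 2 1] by auto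
  moreover
  have "y 0 1 \<noteq> y 1 0" using F7[of 0 1 1 0] by auto
  moreover
  have "y 0 1 \<noteq> y 1 1" using F7[of 0 1 1 1] by auto
  moreover
  have "y 0 1 \<noteq> y 2 0" using F7[of 0 1 2 0] by auto
  moreover
  have "y 0 1 \<noteq> y 2 1" using F7[of 0 1 2 1] by auto
  moreover
  have "y 1 0 \<noteq> y 1 1" using F6[of 1 0 1] by auto
  moreover
  have "y 1 0 \<noteq> y 2 0" using F7[of 1 0 2 0] by auto
  moreover
  have "y 1 0 \<noteq> y 2 1" using F7[of 1 0 2 1] by auto
  moreover
  have "y 1 1 \<noteq> y 2 0" using F7[of 1 1 2 0] by auto
  moreover
  have "y 1 1 \<noteq> y 2 1" using F7[of 1 1 2 1] by auto
  moreover
  have "y 2 0 \<noteq> y 2 1" using F6[of 2 0 1] by auto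
  ultimately have dist: "distinct L" unfolding L_def by simp
  have "set L \<subseteq> WW ends F" unfolding L_def using vW xW yW by auto
  then have "card (set L) \<le> b" using fW card_mono b_def by blast
  moreover have "card (set L) = 10" using distinct_card[OF dist] by (simp add: L_def)
  ultimately show False using b8 by simp
qed

lemma Zs_mono: "F0 \<subseteq> F \<Longrightarrow> Zs ends F0 \<subseteq> Zs ends F"
  by (auto simp: Zs_def)

lemma inter_mono: "F0 \<subseteq> F \<Longrightarrow> inter ends F \<Longrightarrow> inter ends F0"
proof -
  assume a: "F0 \<subseteq> F" "inter ends F"
  have "Zs ends F0 \<subseteq> Zs ends F" using Zs_mono[OF a(1)] .
  then show ?thesis using a(2) unfolding inter_def by (meson subsetD)
qed

lemma small_cycle:
  assumes fF: "finite F" and I: "inter ends F" and F0: "F0 \<subseteq> F" "F0 \<noteq> {}" "card F0 \<le> 4"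
    and cw: "card (WW ends F0) \<le> card F0"
  shows "card (Zs ends F) \<le> 16"
proof -
  have f0: "finite F0" using fF F0 finite_subset by blast
  have "\<exists>C\<in>Zs ends F0. C \<noteq> {}"
  proof (rule ccontr)
    assume "\<not> ?thesis"
    then have "Zs ends F0 \<subseteq> {{}}" by auto
    then have "card (Zs ends F0) \<le> card {{}::'a set}" by (intro card_mono) auto
    then have c1: "card (Zs ends F0) \<le> 1" by simp
    have "2 ^ card F0 \<le> card (Zs ends F0) * (2::nat) ^ (card (WW ends F0) - 1)"
      using T1[OF f0 F0(2), of ends] .
    also have "\<dots> \<le> 1 * (2::nat) ^ (card (WW ends F0) - 1)"
      using c1 by (intro mult_le_mono1)
    finally have "2 ^ card F0 \<le> 1 * (2::nat) ^ (card (WW ends F0) - 1)" .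
    then have "card F0 \<le> card (WW ends F0) - 1" by simp
    moreover have "card F0 > 0" using f0 F0(2) by auto
    ultimately show False using cw by linarith
  qed
  then obtain C where C: "C \<in> Zs ends F0" "C \<noteq> {}" by blast
  have CF: "C \<in> Zs ends F" using C Zs_mono[OF F0(1)] by blast
  have "C \<subseteq> F0" using C by (simp add: Zs_def)
  then have "card C \<le> card F0" using f0 by (rule card_mono[rotated])
  then have "card C \<le> 4" using F0(3) by simp
  then have "(2::nat) ^ card C \<le> 2 ^ 4" by (rule power_increasing) simp
  then have "(2::nat) ^ card C \<le> 16" by simp
  then show ?thesis using L_small[OF fF I CF C(2)] by linarith
qed

lemma main_bound:
  fixes ends :: "'e \<Rightarrow> 'v \<times> 'v" and F :: "'e set"
  shows "finite F \<Longrightarrow> inter ends F \<Longrightarrow> card (Zs ends F) \<le> 16"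
proof (induction "card F" arbitrary: F ends rule: less_induct)
  case (less F ends)
  note IH = less.hyps
  have fF: "finite F" and I: "inter ends F" by fact+
  show ?case
  proof (cases "F = {}")
    case True
    then have "Zs ends F = {{}}" by (auto simp: Zs_def incid_def)
    then show ?thesis by simp
  next
    case ne: False
    show ?thesis
    proof (cases "\<exists>e\<in>F. \<forall>C\<in>Zs ends F. e \<notin> C")
      case True
      then obtain e where e: "e \<in> F" "\<forall>C\<in>Zs ends F. e \<notin> C" by blast
      have eq: "Zs ends (F - {e}) = Zs ends F" using e by (auto simp: Zs_def)
      have "card (F - {e}) < card F" using e fF by (meson card_Diff1_less)
      moreover have "inter ends (F - {e})" using I by (simp add: inter_def eq)
      ultimately have "card (Zs ends (F - {e})) \<le> 16" using IH[of "F - {e}" ends] fF by simp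
      then show ?thesis by (simp add: eq)
    next
      case allin: False
      show ?thesis
      proof (cases "\<exists>F0. F0 \<subseteq> F \<and> F0 \<noteq> {} \<and> card F0 \<le> 4 \<and> card (WW ends F0) \<le> card F0")
        case True
        then show ?thesis using small_cycle[OF fF I] by blast
      next
        case nosm: False
        show ?thesis
        proof (cases "\<exists>v e f. e \<in> F \<and> f \<in> F \<and> e \<noteq> f \<and> v \<in> ep ends e \<and> v \<in> ep ends f \<and> incid ends F v = 2")
          case True
          then obtain v e f where h: "e \<in> F" "f \<in> F" "e \<noteq> f" "v \<in> ep ends e" "v \<in> ep ends f" "incid ends F v = 2"
            by blast
          define ends' where "ends' = ends(f := (other ends v e, other ends v f))"
          have c: "card (Zs ends' (F - {e})) = card (Zs ends F) \<and> (inter ends F \<longrightarrow> inter ends' (F - {e}))"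
            using contract[OF fF h] unfolding ends'_def by blast
          have "card (F - {e}) < card F" using h fF by (meson card_Diff1_less)
          then have "card (Zs ends' (F - {e})) \<le> 16" using IH[of "F - {e}" ends'] fF c I by simp
          then show ?thesis using c by simp
        next
          case nodeg2: False
          have deg3: "incid ends F v \<ge> 3" if vW: "v \<in> WW ends F" for v
          proof -
            obtain e where e: "e \<in> F" "v \<in> ep ends e" using vW by (auto simp: WW_def)
            obtain C where C: "C \<in> Zs ends F" "e \<in> C" using allin e by blast
            have CF: "C \<subseteq> F" and evC: "even (incid ends C v)" using C by (auto simp: Zs_def)
            have fC: "finite C" using CF fF finite_subset by blast
            have "dg ends e v \<le> incid ends C v"
              unfolding incid_sum[OF fC] using C(2) fC by (intro member_le_sum) auto
            then have "incid ends C v \<ge> 1" using dg_pos[OF e(2)] by linarith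
            then have c2: "incid ends C v \<ge> 2" using evC by (cases "incid ends C v"; simp; presburger)
            have "incid ends C v \<le> incid ends F v"
              unfolding incid_sum[OF fC] incid_sum[OF fF] using fF CF by (intro sum_mono2) auto
            then have ge2: "incid ends F v \<ge> 2" using c2 by linarith
            show ?thesis
            proof (rule ccontr)
              assume "\<not> ?thesis"
              then have eq2: "incid ends F v = 2" using ge2 by linarith
              show False
              proof (cases "fst (ends e) = snd (ends e)")
                case True
                have "WW ends {e} = {fst (ends e)}" using True by (auto simp: WW_def ep_def)
                then have "{e} \<subseteq> F \<and> {e} \<noteq> {} \<and> card {e} \<le> 4 \<and> card (WW ends {e}) \<le> card {e}"
                  using e(1) by simp
                then show False using nosm by blast
              next
                case False
                have de: "dg ends e v = 1" using False e(2) by (auto simp: dg_def ep_def)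
                have "incid ends F v = dg ends e v + (\<Sum>g\<in>F - {e}. dg ends g v)"
                  using fF e(1) by (simp add: incid_sum sum.remove)
                then have "(\<Sum>g\<in>F - {e}. dg ends g v) \<noteq> 0" using de eq2 by simp
                then have "\<exists>f\<in>F - {e}. dg ends f v \<noteq> 0"
                proof (rule contrapos_np)
                  assume "\<not> (\<exists>f\<in>F - {e}. dg ends f v \<noteq> 0)"
                  then show "(\<Sum>g\<in>F - {e}. dg ends g v) = 0" by simp
                qed
                then obtain f where f: "f \<in> F - {e}" "dg ends f v \<noteq> 0" by blast
                have "v \<in> ep ends f" using f(2) by (auto simp: dg_def ep_def split: if_splits)
                then show False using nodeg2 f(1) e eq2 by blast
              qed
            qed
          qed
          obtain g where g: "g \<in> F" using ne by blast
          obtain C0 where C0: "C0 \<in> Zs ends F" "g \<in> C0" using allin g by blast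
          have "card (F - {g}) < card F" using g fF by (meson card_Diff1_less)
          moreover have "inter ends (F - {g})" by (rule inter_mono[OF _ I]) auto
          ultimately have "card (Zs ends (F - {g})) \<le> 16" using IH[of "F - {g}" ends] fF by simp
          then have c32: "card (Zs ends F) \<le> 32" using L_half[OF fF C0] by simp
          have nosmall: "card F0 < card (WW ends F0)" if "F0 \<subseteq> F" "F0 \<noteq> {}" "card F0 \<le> 4" for F0
          proof (rule ccontr)
            assume "\<not> card F0 < card (WW ends F0)"
            then have "card (WW ends F0) \<le> card F0" by simp
            then show False using nosm that by blast
          qed
          show ?thesis using cubic[OF fF ne deg3 c32 nosmall] by blast
        qed
      qed
    qed
  qed
qed

definition ends0 :: "nat \<Rightarrow> nat \<times> nat" where "ends0 e = (e div 3, 3 + e mod 3)"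
definition ks :: "nat list" where "ks = [0,1,3,4]"
definition Em :: "nat \<Rightarrow> nat set" where "Em m = {0..8} - (set ks - set (take m ks))"
definition Ql :: "nat \<Rightarrow> nat list" where
  "Ql i = (if i = 0 then [0,2,6,8] else if i = 1 then [1,2,7,8] else if i = 2 then [3,5,6,8] else [4,5,7,8])"
definition Q :: "nat \<Rightarrow> nat set" where "Q i = set (Ql i)"

lemma card_filter_list: "distinct xs \<Longrightarrow> card {e \<in> set xs. P e} = length (filter P xs)"
proof -
  assume d: "distinct xs"
  have "{e \<in> set xs. P e} = set (filter P xs)" by auto
  moreover have "card (set (filter P xs)) = length (filter P xs)"
    using d by (intro distinct_card) simp
  ultimately show ?thesis by simp
qed

lemma incid_list: "distinct xs \<Longrightarrow> incid ends0 (set xs) v = length (filter (\<lambda>e. e div 3 = v) xs) + length (filter (\<lambda>e. 3 + e mod 3 = v) xs)"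
  unfolding incid_def ends0_def by (simp add: card_filter_list)

lemma filter_empty: "{x \<in> {}. P x} = {}" by auto
lemma filter_insert: "{x \<in> insert a A. P x} = (if P a then insert a {x\<in>A. P x} else {x\<in>A. P x})"
  by auto

lemma incid_row: "C \<subseteq> {0..8} \<Longrightarrow> r \<le> 2 \<Longrightarrow> incid ends0 C r = card {e\<in>C. e div 3 = r}"
  unfolding incid_def ends0_def by simp

lemma incid_col: "C \<subseteq> {0..8} \<Longrightarrow> c \<le> 2 \<Longrightarrow> incid ends0 C (3 + c) = card {e\<in>C. e mod 3 = c}"
proof -
  assume a: "C \<subseteq> {0..8}" "c \<le> 2"
  have e: "{e\<in>C. fst (ends0 e) = 3 + c} = {}" using a(1) by (fastforce simp: ends0_def)
  show ?thesis unfolding incid_def e by (simp add: ends0_def)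
qed

lemma six: "(v::nat) \<in> {0..5} \<Longrightarrow> v = 0 \<or> v = 1 \<or> v = 2 \<or> v = 3 \<or> v = 4 \<or> v = 5"
  by auto
lemma four: "(i::nat) < 4 \<Longrightarrow> i = 0 \<or> i = 1 \<or> i = 2 \<or> i = 3"
  by auto

lemma Q_cyc: "i < 4 \<Longrightarrow> v \<in> {0..5} \<Longrightarrow> even (incid ends0 (Q i) v)"
proof -
  assume i: "i < 4" and v: "v \<in> {0..5}"
  have d: "distinct (Ql i)" using four[OF i] by (auto simp: Ql_def)
  show ?thesis unfolding Q_def incid_list[OF d] using four[OF i] six[OF v]
    by (elim disjE) (simp_all add: Ql_def)
qed

lemma Q_ks: "i < 4 \<Longrightarrow> j < 4 \<Longrightarrow> (ks ! j \<in> Q i) = (j = i)"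
  apply (drule four, drule four)
  unfolding ks_def Q_def Ql_def
  apply (elim disjE)
  apply simp_all
  done


lemma ks_Em: "i < 4 \<Longrightarrow> m \<le> 4 \<Longrightarrow> (ks ! i \<in> Em m) = (i < m)"
proof -
  assume i: "i < 4" and m: "m \<le> 4"
  have "m = 0 \<or> m = 1 \<or> m = 2 \<or> m = 3 \<or> m = 4" using m by auto
  then show ?thesis using four[OF i] unfolding Em_def ks_def
    by (elim disjE) simp_all
qed

lemma Q_Em: "i < m \<Longrightarrow> m \<le> 4 \<Longrightarrow> Q i \<subseteq> Em m"
proof -
  assume i: "i < m" and m: "m \<le> 4"
  have "m = 1 \<or> m = 2 \<or> m = 3 \<or> m = 4" using m i by auto
  then show ?thesis using four[of i] i m unfolding Em_def ks_def Q_def Ql_def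
    by (elim disjE) auto
qed

lemma Em_sub: "Em m \<subseteq> {0..8}" by (auto simp: Em_def)

lemma not_in_even: "finite S \<Longrightarrow> S \<subseteq> {a} \<Longrightarrow> even (card S) \<Longrightarrow> a \<notin> S"
proof
  assume "finite S" "S \<subseteq> {a}" "even (card S)" "a \<in> S"
  then have "S = {a}" by auto
  then show False using \<open>even (card S)\<close> by simp
qed

lemma tree_zero:
  assumes X: "X \<subseteq> {0..8}" "X \<inter> set ks = {}" and ev: "\<forall>v\<in>{0..5}. even (incid ends0 X v)"
  shows "X = {}"
proof -
  have e9: "{0..8::nat} = {0,1,2,3,4,5,6,7,8}" by (auto simp: numeral_eq_Suc)
  have X1: "X \<subseteq> {2,5,6,7,8}" using X unfolding e9 by (auto simp: ks_def)
  have fX: "finite X" using X1 finite_subset by blast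
  have r: "even (card {e\<in>X. e div 3 = r})" if "r \<le> 2" for r
  proof -
    have "r \<in> {0..5}" using that by auto
    then show ?thesis using ev incid_row[OF X(1) that] by metis
  qed
  have c: "even (card {e\<in>X. e mod 3 = c})" if "c \<le> 2" for c
  proof -
    have "3 + c \<in> {0..5}" using that by auto
    then show ?thesis using ev incid_col[OF X(1) that] by metis
  qed
  have fin: "finite {e\<in>X. P e}" for P using fX by simp
  have "{e\<in>X. e div 3 = 0} \<subseteq> {2}" using X1 by auto
  then have sub2: "{e\<in>X. e div 3 = 0} \<subseteq> {2}" .
  have ev2: "even (card {e\<in>X. e div 3 = 0})" by (rule r) simp
  have "2 \<notin> {e\<in>X. e div 3 = 0}" using not_in_even[OF fin[of "\<lambda>e. e div 3 = 0"] sub2 ev2] .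
  then have n2: "2 \<notin> X" by simp
  have "{e\<in>X. e div 3 = 1} \<subseteq> {5}" using X1 by auto
  then have sub5: "{e\<in>X. e div 3 = 1} \<subseteq> {5}" .
  have ev5: "even (card {e\<in>X. e div 3 = 1})" by (rule r) simp
  have "5 \<notin> {e\<in>X. e div 3 = 1}" using not_in_even[OF fin[of "\<lambda>e. e div 3 = 1"] sub5 ev5] .
  then have n5: "5 \<notin> X" by simp
  have "{e\<in>X. e mod 3 = 0} \<subseteq> {6}" using X1 n2 n5 by auto
  then have sub6: "{e\<in>X. e mod 3 = 0} \<subseteq> {6}" .
  have ev6: "even (card {e\<in>X. e mod 3 = 0})" by (rule c) simp
  have "6 \<notin> {e\<in>X. e mod 3 = 0}" using not_in_even[OF fin[of "\<lambda>e. e mod 3 = 0"] sub6 ev6] .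
  then have n6: "6 \<notin> X" by simp
  have "{e\<in>X. e mod 3 = 1} \<subseteq> {7}" using X1 n2 n5 by auto
  then have sub7: "{e\<in>X. e mod 3 = 1} \<subseteq> {7}" .
  have ev7: "even (card {e\<in>X. e mod 3 = 1})" by (rule c) simp
  have "7 \<notin> {e\<in>X. e mod 3 = 1}" using not_in_even[OF fin[of "\<lambda>e. e mod 3 = 1"] sub7 ev7] .
  then have n7: "7 \<notin> X" by simp
  have "{e\<in>X. e div 3 = 2} \<subseteq> {8}" using X1 n6 n7 by auto
  then have sub8: "{e\<in>X. e div 3 = 2} \<subseteq> {8}" .
  have ev8: "even (card {e\<in>X. e div 3 = 2})" by (rule r) simp
  have "8 \<notin> {e\<in>X. e div 3 = 2}" using not_in_even[OF fin[of "\<lambda>e. e div 3 = 2"] sub8 ev8] .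
  then have n8: "8 \<notin> X" by simp
  show ?thesis using X1 n2 n5 n6 n7 n8 by auto
qed

lemma two_rows:
  assumes C: "C \<subseteq> {0..8}" "C \<noteq> {}" and ev: "\<forall>v\<in>{0..5}. even (incid ends0 C v)"
  shows "\<exists>r1 r2. r1 \<le> 2 \<and> r2 \<le> 2 \<and> r1 \<noteq> r2 \<and> (\<exists>e\<in>C. e div 3 = r1) \<and> (\<exists>e\<in>C. e div 3 = r2)"
proof -
  obtain e where e: "e \<in> C" using C by auto
  define c where "c = e mod 3"
  have c2: "c \<le> 2" unfolding c_def using mod_less_divisor[of 3 e] by linarith
  have fC: "finite C" using C finite_subset by blast
  define S where "S = {e'\<in>C. e' mod 3 = c}"
  have evS: "even (card S)"
  proof -
    have "3 + c \<in> {0..5}" using c2 by auto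
    then show ?thesis using ev incid_col[OF C(1) c2] unfolding S_def by metis
  qed
  have "\<exists>e'\<in>S. e' \<noteq> e"
  proof (rule ccontr)
    assume "\<not> ?thesis"
    then have sub: "S \<subseteq> {e}" by auto
    have finS: "finite S" using fC by (simp add: S_def)
    have "e \<notin> S" using not_in_even[OF finS sub evS] .
    then show False using e by (simp add: S_def c_def)
  qed
  then obtain e' where e': "e' \<in> C" "e' mod 3 = c" "e' \<noteq> e" by (auto simp: S_def)
  have "e div 3 \<noteq> e' div 3"
  proof
    assume "e div 3 = e' div 3"
    then have "3 * (e div 3) + e mod 3 = 3 * (e' div 3) + e' mod 3" using e'(2) c_def by simp
    then show False using e'(3) by simp
  qed
  moreover have "e div 3 \<le> 2" "e' div 3 \<le> 2"
  proof -
    have "e \<le> 8" "e' \<le> 8" using C(1) e e'(1) by auto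
    then have "e div 3 \<le> 8 div 3" "e' div 3 \<le> 8 div 3" using div_le_mono by blast+
    then show "e div 3 \<le> 2" "e' div 3 \<le> 2" by simp_all
  qed
  ultimately show ?thesis using e e' by blast
qed

lemma row_card: "r \<le> 2 \<Longrightarrow> card {e\<in>{0..8::nat}. e div 3 = r} = 3"
proof -
  assume r: "r \<le> 2"
  have "{0..8::nat} = set [0..<9]" by auto
  then have "card {e\<in>{0..8::nat}. e div 3 = r} = length (filter (\<lambda>e. e div 3 = r) [0..<9])"
    using card_filter_list[of "[0..<9]"] by simp
  moreover have "r = 0 \<or> r = 1 \<or> r = 2" using r by auto
  ultimately show ?thesis by (auto simp: upt_rec)
qed

lemma K33_inter:
  assumes C: "C \<subseteq> {0..8}" "C \<noteq> {}" "\<forall>v\<in>{0..5}. even (incid ends0 C v)"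
      and D: "D \<subseteq> {0..8}" "D \<noteq> {}" "\<forall>v\<in>{0..5}. even (incid ends0 D v)"
  shows "C \<inter> D \<noteq> {}"
proof
  assume disj: "C \<inter> D = {}"
  have rowok: False if r: "r \<le> 2" "\<exists>e\<in>C. e div 3 = r" "\<exists>e\<in>D. e div 3 = r" for r
  proof -
    have fC: "finite C" "finite D" using C D finite_subset by blast+
    define RC where "RC = {e\<in>C. e div 3 = r}"
    define RD where "RD = {e\<in>D. e div 3 = r}"
    have r5: "r \<in> {0..5}" using r(1) by auto
    have eC: "even (card RC)" using C(3) r5 incid_row[OF C(1) r(1)] unfolding RC_def by metis
    have eD: "even (card RD)" using D(3) r5 incid_row[OF D(1) r(1)] unfolding RD_def by metis
    have "card RC \<noteq> 0" using r(2) fC by (auto simp: RC_def)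
    then have c1: "card RC \<ge> 2" using eC by presburger
    have "card RD \<noteq> 0" using r(3) fC by (auto simp: RD_def)
    then have c2: "card RD \<ge> 2" using eD by presburger
    have "card (RC \<union> RD) = card RC + card RD"
      using fC disj by (intro card_Un_disjoint) (auto simp: RC_def RD_def)
    moreover have "card (RC \<union> RD) \<le> card {e\<in>{0..8::nat}. e div 3 = r}"
      using C(1) D(1) by (intro card_mono) (auto simp: RC_def RD_def)
    ultimately show False using row_card[OF r(1)] c1 c2 by linarith
  qed
  obtain r1 r2 where a: "r1 \<le> 2" "r2 \<le> 2" "r1 \<noteq> r2" "\<exists>e\<in>C. e div 3 = r1" "\<exists>e\<in>C. e div 3 = r2"
    using two_rows[OF C] by blast
  obtain r3 r4 where b: "r3 \<le> 2" "r4 \<le> 2" "r3 \<noteq> r4" "\<exists>e\<in>D. e div 3 = r3" "\<exists>e\<in>D. e div 3 = r4"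
    using two_rows[OF D] by blast
  have "r1 = r3 \<or> r1 = r4 \<or> r2 = r3 \<or> r2 = r4" using a(1-3) b(1-3) by arith
  then show False using rowok a b by blast
qed

lemma exist_graph:
  assumes m1: "1 \<le> m" and m4: "m \<le> 4"
  shows "graph {0..5} (Em m) ends0 \<and> hom_poset_iso_Am {0..5} (Em m) ends0 m"
proof -
  define Cy where "Cy = cycles {0..5} (Em m) ends0"
  have finE: "finite (Em m)" using finite_subset[OF Em_sub] by simp
  have cy: "C \<in> Cy \<longleftrightarrow> C \<subseteq> Em m \<and> (\<forall>v\<in>{0..5}. even (incid ends0 C v))" for C
  proof
    assume "C \<in> Cy" then show "C \<subseteq> Em m \<and> (\<forall>v\<in>{0..5}. even (incid ends0 C v))"
      unfolding Cy_def cycles_def by simp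
  next
    assume a: "C \<subseteq> Em m \<and> (\<forall>v\<in>{0..5}. even (incid ends0 C v))"
    then have "finite C" using finite_subset[OF _ finE] by blast
    then show "C \<in> Cy" using a unfolding Cy_def cycles_def by simp
  qed
  have cyS: "C \<in> Cy \<Longrightarrow> C \<subseteq> Em m" for C using cy by simp
  have cyV: "C \<in> Cy \<Longrightarrow> v \<in> {0..5} \<Longrightarrow> even (incid ends0 C v)" for C v using cy by simp
  have cyI: "C \<subseteq> Em m \<Longrightarrow> (\<And>v. v \<in> {0..5} \<Longrightarrow> even (incid ends0 C v)) \<Longrightarrow> C \<in> Cy" for C
    using cy by simp
  have cy8: "C \<in> Cy \<Longrightarrow> C \<subseteq> {0..8}" for C using cyS Em_sub by (meson order_trans)
  have cyF: "C \<in> Cy \<Longrightarrow> finite C" for C using cyS finite_subset[OF _ finE] by blast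
  have symd: "symdiff C D \<in> Cy" if "C \<in> Cy" "D \<in> Cy" for C D
  proof (rule cyI)
    have fin: "finite C" "finite D" using that cyF by auto
    show "symdiff C D \<subseteq> Em m" using cyS[OF that(1)] cyS[OF that(2)] by (auto simp: symdiff_def)
    fix v :: nat assume v: "v \<in> {0..5}"
    show "even (incid ends0 (symdiff C D) v)"
      using cyV[OF that(1) v] cyV[OF that(2) v] incid_symdiff_even[OF fin, of ends0 v] by simp
  qed
  have emp: "{} \<in> Cy" by (rule cyI) (simp_all add: incid_def)
  define f where "f C = {i. i < m \<and> ks ! i \<in> C}" for C
  have inj: "inj_on f Cy"
  proof (rule inj_onI)
    fix C D assume C: "C \<in> Cy" and D: "D \<in> Cy" and eq: "f C = f D"
    define X where "X = symdiff C D"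
    have XC: "X \<in> Cy" using symd C D by (simp add: X_def)
    have "X \<inter> set ks = {}"
    proof (rule ccontr)
      assume "X \<inter> set ks \<noteq> {}"
      then obtain k where k: "k \<in> X" "k \<in> set ks" by blast
      then obtain i where i0: "i < length ks" "k = ks ! i" by (metis in_set_conv_nth)
      have i: "i < 4" "k = ks ! i" using i0 by (simp_all add: ks_def)
      show False
      proof (cases "i < m")
        case True
        have "(ks ! i \<in> C) = (ks ! i \<in> D)" using eq True by (auto simp: f_def set_eq_iff)
        then show False using k i by (auto simp: X_def symdiff_def)
      next
        case False
        then have "ks ! i \<notin> Em m" using ks_Em[OF i(1) m4] by simp
        then show False using k i cyS[OF C] cyS[OF D] by (auto simp: X_def symdiff_def)
      qed
    qed
    then have "X = {}" using tree_zero[OF cy8[OF XC]] cyV[OF XC] by blast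
    then show "C = D" by (simp add: X_def symdiff_eq_empty)
  qed
  have fsym: "f (symdiff C D) = symdiff (f C) (f D)" for C D
    by (auto simp: f_def symdiff_def)
  have surj: "\<exists>C\<in>Cy. f C = S" if "S \<subseteq> {..<m}" for S
  proof -
    have "finite S" using that finite_subset by blast
    then show ?thesis using that
    proof (induction S rule: finite_subset_induct)
      case empty
      then show ?case using emp by (auto simp: f_def)
    next
      case (insert i S)
      then obtain C where C: "C \<in> Cy" "f C = S" by blast
      have im: "i < m" using insert by simp
      have i4: "i < 4" using im m4 by simp
      have QC: "Q i \<in> Cy" by (rule cyI[OF Q_Em[OF im m4]]) (rule Q_cyc[OF i4])
      have "symdiff C (Q i) \<in> Cy" using symd C QC by blast
      moreover have "f (Q i) = {i}"
        using Q_ks[OF i4] m4 im by (auto simp: f_def)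
      then have "f (symdiff C (Q i)) = insert i S"
        using fsym C insert(3) by (auto simp: symdiff_def)
      ultimately show ?case by blast
    qed
  qed
  have img: "f ` Cy = Am m"
  proof
    show "f ` Cy \<subseteq> Am m" by (auto simp: Am_def f_def)
    show "Am m \<subseteq> f ` Cy" using surj by (auto simp: Am_def)
  qed
  have bij: "bij_betw f Cy (Am m)" using inj img by (simp add: bij_betw_def)
  have f0: "f C = {} \<longleftrightarrow> C = {}" if "C \<in> Cy" for C
  proof
    assume "f C = {}"
    moreover have "f {} = {}" by (simp add: f_def)
    ultimately show "C = {}" using inj that emp by (metis inj_onD)
  qed (simp add: f_def)
  have ord: "C \<subseteq> D \<longleftrightarrow> triv_le (f C) (f D)" if C: "C \<in> Cy" and D: "D \<in> Cy" for C D
  proof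
    assume sub: "C \<subseteq> D"
    show "triv_le (f C) (f D)"
    proof (cases "C = {} \<or> C = D")
      case True then show ?thesis using f0 C by (auto simp: triv_le_def)
    next
      case False
      then have ne: "C \<noteq> {}" "C \<noteq> D" by auto
      define X where "X = symdiff C D"
      have XC: "X \<in> Cy" using symd C D by (simp add: X_def)
      have "X \<noteq> {}" using ne by (simp add: X_def symdiff_eq_empty)
      moreover have "C \<inter> X = {}" using sub by (auto simp: X_def symdiff_def)
      ultimately have False
        using K33_inter[OF cy8[OF C] ne(1) _ cy8[OF XC]] cyV[OF C] cyV[OF XC] by blast
      then show ?thesis ..
    qed
  next
    assume "triv_le (f C) (f D)"
    then show "C \<subseteq> D" unfolding triv_le_def using f0[OF C] inj C D by (auto dest: inj_onD)
  qed
  have g: "graph {0..5} (Em m) ends0"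
    unfolding graph_def
  proof
    fix e assume "e \<in> Em m"
    then have "e \<in> {0..8}" using Em_sub by blast
    then have e8: "e \<le> 8" by simp
    then have "e div 3 \<le> 8 div 3" using div_le_mono by blast
    moreover have "e mod 3 < 3" by simp
    ultimately show "fst (ends0 e) \<in> {0..5} \<and> snd (ends0 e) \<in> {0..5}"
      by (simp add: ends0_def)
  qed
  have "hom_poset_iso_Am {0..5} (Em m) ends0 m"
    unfolding hom_poset_iso_Am_def
    using bij fsym ord by (fold Cy_def) blast
  then show ?thesis using g by blast
qed

lemma no_graph_ge5:
  fixes V :: "'v set" and E :: "'e set" and ends :: "'e \<Rightarrow> 'v \<times> 'v"
  assumes g: "graph V E ends" and iso: "hom_poset_iso_Am V E ends m" and m5: "m \<ge> 5"
  shows False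
proof -
  define Cy where "Cy = cycles V E ends"
  have "\<exists>f. bij_betw f Cy (Am m)
        \<and> (\<forall>C\<in>Cy. \<forall>D\<in>Cy. f (symdiff C D) = symdiff (f C) (f D))
        \<and> (\<forall>C\<in>Cy. \<forall>D\<in>Cy. C \<subseteq> D \<longleftrightarrow> triv_le (f C) (f D))"
    using iso unfolding hom_poset_iso_Am_def Cy_def .
  then obtain f where bij: "bij_betw f Cy (Am m)"
    and add0: "\<forall>C\<in>Cy. \<forall>D\<in>Cy. f (symdiff C D) = symdiff (f C) (f D)"
    and ord0: "\<forall>C\<in>Cy. \<forall>D\<in>Cy. C \<subseteq> D \<longleftrightarrow> triv_le (f C) (f D)"
    by (elim exE conjE)
  have add: "f (symdiff C D) = symdiff (f C) (f D)" if "C \<in> Cy" "D \<in> Cy" for C D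
    using add0 that by blast
  have ord: "C \<subseteq> D \<longleftrightarrow> triv_le (f C) (f D)" if "C \<in> Cy" "D \<in> Cy" for C D
    using ord0 that by blast
  have finA: "finite (Am m)" by (simp add: Am_def)
  have finCy: "finite Cy" using bij finA bij_betw_finite by blast
  have cardCy: "card Cy = 2 ^ m" using bij bij_betw_same_card[OF bij] by (simp add: Am_def card_Pow)
  define F where "F = \<Union> Cy"
  have finF: "finite F" unfolding F_def using finCy by (auto simp: Cy_def cycles_def)
  have FE: "F \<subseteq> E" by (auto simp: F_def Cy_def cycles_def)
  have zero: "incid ends C v = 0" if "C \<subseteq> E" "v \<notin> V" for C v
  proof -
    have z1: "{e\<in>C. fst (ends e) = v} = {}" and z2: "{e\<in>C. snd (ends e) = v} = {}"
      using g that unfolding graph_def by auto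
    show ?thesis unfolding incid_def z1 z2 by simp
  qed
  have ZF: "Zs ends F = Cy"
  proof
    show "Zs ends F \<subseteq> Cy"
    proof
      fix C assume C: "C \<in> Zs ends F"
      then have "C \<subseteq> F" by (simp add: Zs_def)
      then show "C \<in> Cy" using C FE finF finite_subset by (auto simp: Zs_def Cy_def cycles_def)
    qed
    show "Cy \<subseteq> Zs ends F"
    proof
      fix C assume C: "C \<in> Cy"
      have "C \<subseteq> F" using C by (auto simp: F_def)
      moreover have "even (incid ends C v)" for v
        using C zero[of C v] by (cases "v \<in> V") (auto simp: Cy_def cycles_def)
      ultimately show "C \<in> Zs ends F" by (simp add: Zs_def)
    qed
  qed
  have emp: "{} \<in> Cy" using ZF Zs_empty by blast
  have inj: "inj_on f Cy" using bij bij_betw_def by blast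
  have fe: "f {} = {}" using add[OF emp emp] by (simp add: symdiff_def)
  have I: "inter ends F"
    unfolding inter_def ZF
  proof (intro ballI impI)
    fix C D assume C: "C \<in> Cy" and D: "D \<in> Cy" and ne: "C \<noteq> {}" "D \<noteq> {}"
    show "C \<inter> D \<noteq> {}"
    proof
      assume disj: "C \<inter> D = {}"
      define X where "X = symdiff C D"
      have XC: "X \<in> Cy" using Zs_symdiff[OF finF, of C ends D] C D ZF by (simp add: X_def)
      have "C \<subseteq> X" using disj by (auto simp: X_def symdiff_def)
      then have "triv_le (f C) (f X)" using ord C XC by blast
      then have "f C = {} \<or> f C = f X" by (simp add: triv_le_def)
      then show False
      proof
        assume "f C = {}"
        then have "C = {}" using inj C emp fe by (metis inj_onD)
        then show False using ne by simp
      next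
        assume "f C = f X"
        then have "C = X" using inj C XC by (metis inj_onD)
        then show False using disj ne(2) by (auto simp: X_def symdiff_def)
      qed
    qed
  qed
  have "card (Zs ends F) \<le> 16" using main_bound[OF finF I] .
  then have "(2::nat) ^ m \<le> 16" using ZF cardCy by simp
  moreover have "(2::nat) ^ 5 \<le> 2 ^ m" using m5 by (rule power_increasing) simp
  ultimately show False by simp
qed

theorem theorem13p1:
  fixes m :: nat
  assumes "m \<ge> 1"
  shows "(m \<le> 4 \<longrightarrow> (\<exists>(V::nat set) (E::nat set) (ends::nat \<Rightarrow> nat \<times> nat).
              graph V E ends \<and> hom_poset_iso_Am V E ends m))
       \<and> (m \<ge> 5 \<longrightarrow> (\<forall>(V::'v set) (E::'e set) (ends::'e \<Rightarrow> 'v \<times> 'v).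
              graph V E ends \<longrightarrow> \<not> hom_poset_iso_Am V E ends m))"
  using exist_graph[OF assms] no_graph_ge5 by blast

end
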